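(* Let $\ell, c \in \mathbb{N}$. Over directed graphs, every $\mathrm{C}^2_{\ell,c}$ formula (whose free variables are therefore among $x,y$) is equivalent to a finite disjunction $$\bigvee_{i=1}^n \big( \alpha_i(x) \land \beta_i(y) \land \gamma_i(x,y) \big),$$ where $\alpha_i(x), \beta_i(y) \in \mathrm{C}^2_{\ell,c}$ and each $\gamma_i(x,y)$ is one of the following five formulas: $E(x, y) \land E(y, x)$; $E(x, y) \land \neg E(y, x)$; $\neg E(x, y) \land E(y, x)$; $\neg E(x, y) \land\neg E(y , x)\land x\neq y$; $x=y$.
   Context: A directed graph of dimension $d$ is a tuple $G=(V,E,\lambda)$ with $V$ a finite set of nodes, $E\subseteq V\times V$ with no loops $(v,v)$, and $\lambda:V\to\{0,1\}^d$. It is identified with the first-order structure with domain $V$, binary relation $E$, and unary predicates $P_1,\dots,P_d$ where $P_i=\{v:\lambda(v)_i=1\}$. $\mathrm{C}^2$ is the fragment of first-order logic (with equality, $E$, $P_1,\dots,P_d$) using only the two variables $x,y$ but allowing counting quantifiers $\exists_k$ for $k\in\mathbb{N}$, where $\exists_k x\,\varphi$ means that $\varphi$ holds for at least $k$ distinct elements. The quantifier depth of a formula is its maximal nesting of quantifiers, and its counting rank is the maximal $k$ occurring in its counting quantifiers. $\mathrm{C}^2_{\ell,c}$ denotes the $\mathrm{C}^2$ formulas of depth at most $\ell$ and counting rank at most $c$. "Equivalent over directed graphs" means: satisfied by the same assignments in every directed graph (as defined, i.e. loop-free). *)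

theory Defs
  imports Main
begin

text \<open>Nodes are natural numbers (every finite graph is isomorphic to one on nat).
  lab v i is the i-th bit of the label of v, meaningful for 1 \<le> i \<le> d.\<close>

record dgraph =
  nodes :: "nat set"
  edges :: "(nat \<times> nat) set"
  lab :: "nat \<Rightarrow> nat \<Rightarrow> bool"

definition is_digraph :: "dgraph \<Rightarrow> bool" where
  "is_digraph G \<longleftrightarrow> finite (nodes G) \<and> edges G \<subseteq> nodes G \<times> nodes G
     \<and> (\<forall>v. (v, v) \<notin> edges G)"

datatype var = X | Y

datatype c2 =
    CEq var var
  | CEdge var var
  | CPred nat var
  | CNot c2
  | CAnd c2 c2
  | COr c2 c2
  | CEx nat var c2   \<comment> \<open>CEx k v phi: at least k elements v satisfy phi\<close>

fun wf_c2 :: "nat \<Rightarrow> c2 \<Rightarrow> bool" where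
  "wf_c2 d (CPred i v) \<longleftrightarrow> 1 \<le> i \<and> i \<le> d"
| "wf_c2 d (CNot f) \<longleftrightarrow> wf_c2 d f"
| "wf_c2 d (CAnd f g) \<longleftrightarrow> wf_c2 d f \<and> wf_c2 d g"
| "wf_c2 d (COr f g) \<longleftrightarrow> wf_c2 d f \<and> wf_c2 d g"
| "wf_c2 d (CEx k v f) \<longleftrightarrow> wf_c2 d f"
| "wf_c2 d _ \<longleftrightarrow> True"

fun depth :: "c2 \<Rightarrow> nat" where
  "depth (CNot f) = depth f"
| "depth (CAnd f g) = max (depth f) (depth g)"
| "depth (COr f g) = max (depth f) (depth g)"
| "depth (CEx k v f) = Suc (depth f)"
| "depth _ = 0"

fun crank :: "c2 \<Rightarrow> nat" where
  "crank (CNot f) = crank f"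
| "crank (CAnd f g) = max (crank f) (crank g)"
| "crank (COr f g) = max (crank f) (crank g)"
| "crank (CEx k v f) = max k (crank f)"
| "crank _ = 0"

fun free_vars :: "c2 \<Rightarrow> var set" where
  "free_vars (CEq u v) = {u, v}"
| "free_vars (CEdge u v) = {u, v}"
| "free_vars (CPred i v) = {v}"
| "free_vars (CNot f) = free_vars f"
| "free_vars (CAnd f g) = free_vars f \<union> free_vars g"
| "free_vars (COr f g) = free_vars f \<union> free_vars g"
| "free_vars (CEx k v f) = free_vars f - {v}"

fun sat :: "dgraph \<Rightarrow> (var \<Rightarrow> nat) \<Rightarrow> c2 \<Rightarrow> bool" where
  "sat G a (CEq u v) \<longleftrightarrow> a u = a v"
| "sat G a (CEdge u v) \<longleftrightarrow> (a u, a v) \<in> edges G"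
| "sat G a (CPred i v) \<longleftrightarrow> lab G (a v) i"
| "sat G a (CNot f) \<longleftrightarrow> \<not> sat G a f"
| "sat G a (CAnd f g) \<longleftrightarrow> sat G a f \<and> sat G a g"
| "sat G a (COr f g) \<longleftrightarrow> sat G a f \<or> sat G a g"
| "sat G a (CEx k v f) \<longleftrightarrow> k \<le> card {b \<in> nodes G. sat G (a(v := b)) f}"

definition gammas :: "c2 set" where
  "gammas = {
     CAnd (CEdge X Y) (CEdge Y X),
     CAnd (CEdge X Y) (CNot (CEdge Y X)),
     CAnd (CNot (CEdge X Y)) (CEdge Y X),
     CAnd (CAnd (CNot (CEdge X Y)) (CNot (CEdge Y X))) (CNot (CEq X Y)),
     CEq X Y}"

abbreviation in_C2 :: "nat \<Rightarrow> nat \<Rightarrow> nat \<Rightarrow> c2 \<Rightarrow> bool" where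
  "in_C2 d l c f \<equiv> wf_c2 d f \<and> depth f \<le> l \<and> crank f \<le> c"

end

theory Submission
  imports Defs
begin

definition okx :: "nat \<Rightarrow> nat \<Rightarrow> nat \<Rightarrow> c2 \<Rightarrow> bool" where
  "okx d l c f \<longleftrightarrow> in_C2 d l c f \<and> free_vars f \<subseteq> {X}"
definition oky :: "nat \<Rightarrow> nat \<Rightarrow> nat \<Rightarrow> c2 \<Rightarrow> bool" where
  "oky d l c f \<longleftrightarrow> in_C2 d l c f \<and> free_vars f \<subseteq> {Y}"

definition good :: "nat \<Rightarrow> nat \<Rightarrow> nat \<Rightarrow> (c2 \<times> c2 \<times> c2) list \<Rightarrow> bool" where
  "good d l c L \<longleftrightarrow> (\<forall>(\<alpha>, \<beta>, \<gamma>) \<in> set L. okx d l c \<alpha> \<and> oky d l c \<beta> \<and> \<gamma> \<in> gammas)"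

definition rep :: "(c2 \<times> c2 \<times> c2) list \<Rightarrow> dgraph \<Rightarrow> (var \<Rightarrow> nat) \<Rightarrow> bool" where
  "rep L G a \<longleftrightarrow> (\<exists>(\<alpha>, \<beta>, \<gamma>) \<in> set L. sat G a \<alpha> \<and> sat G a \<beta> \<and> sat G a \<gamma>)"

definition lf :: "dgraph \<Rightarrow> bool" where
  "lf G \<longleftrightarrow> (\<forall>v. (v, v) \<notin> edges G)"

definition TX :: c2 where "TX = CEq X X"
definition TY :: c2 where "TY = CEq Y Y"

lemma okx_and: "okx d l c a \<Longrightarrow> okx d l c b \<Longrightarrow> okx d l c (CAnd a b)"
  by (simp add: okx_def)
lemma oky_and: "oky d l c a \<Longrightarrow> oky d l c b \<Longrightarrow> oky d l c (CAnd a b)"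
  by (simp add: oky_def)
lemma okx_not: "okx d l c a \<Longrightarrow> okx d l c (CNot a)"
  by (simp add: okx_def)
lemma oky_not: "oky d l c a \<Longrightarrow> oky d l c (CNot a)"
  by (simp add: oky_def)

lemma TX_ok: "okx d l c TX" by (simp add: okx_def TX_def)
lemma TY_ok: "oky d l c TY" by (simp add: oky_def TY_def)
lemma TX_sat: "sat G a TX" by (simp add: TX_def)
lemma TY_sat: "sat G a TY" by (simp add: TY_def)

definition gl :: "c2 list" where
  "gl = [CAnd (CEdge X Y) (CEdge Y X),
     CAnd (CEdge X Y) (CNot (CEdge Y X)),
     CAnd (CNot (CEdge X Y)) (CEdge Y X),
     CAnd (CAnd (CNot (CEdge X Y)) (CNot (CEdge Y X))) (CNot (CEq X Y)),
     CEq X Y]"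

lemma set_gl: "set gl = gammas" by (simp add: gl_def gammas_def)

lemma exh: "\<exists>g\<in>gammas. sat G a g"
  by (auto simp: gammas_def)

lemma excl: "lf G \<Longrightarrow> g1 \<in> gammas \<Longrightarrow> g2 \<in> gammas \<Longrightarrow> sat G a g1 \<Longrightarrow> sat G a g2 \<Longrightarrow> g1 = g2"
  by (auto simp: gammas_def lf_def)

lemma from_gammas:
  assumes "set Lg \<subseteq> gammas"
    and "\<And>G a. lf G \<Longrightarrow> sat G a phi \<longleftrightarrow> (\<exists>g\<in>set Lg. sat G a g)"
  shows "\<exists>L. good d l c L \<and> (\<forall>G a. lf G \<longrightarrow> (sat G a phi \<longleftrightarrow> rep L G a))"
proof (intro exI conjI allI impI)
  show "good d l c (map (\<lambda>g. (TX, TY, g)) Lg)"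
    using assms(1) TX_ok TY_ok by (auto simp: good_def)
  fix G a assume "lf G"
  then show "sat G a phi \<longleftrightarrow> rep (map (\<lambda>g. (TX, TY, g)) Lg) G a"
    using assms(2) by (auto simp: rep_def TX_sat TY_sat)
qed

lemma xonly:
  assumes "okx d l c phi"
  shows "\<exists>L. good d l c L \<and> (\<forall>G a. lf G \<longrightarrow> (sat G a phi \<longleftrightarrow> rep L G a))"
proof (intro exI conjI allI impI)
  show "good d l c (map (\<lambda>g. (phi, TY, g)) gl)"
    using assms TY_ok by (auto simp: good_def set_gl)
  fix G a assume "lf G"
  show "sat G a phi \<longleftrightarrow> rep (map (\<lambda>g. (phi, TY, g)) gl) G a"
    using exh[of G a] by (auto simp: rep_def TY_sat set_gl)
qed

lemma yonly:
  assumes "oky d l c phi"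
  shows "\<exists>L. good d l c L \<and> (\<forall>G a. lf G \<longrightarrow> (sat G a phi \<longleftrightarrow> rep L G a))"
proof (intro exI conjI allI impI)
  show "good d l c (map (\<lambda>g. (TX, phi, g)) gl)"
    using assms TX_ok by (auto simp: good_def set_gl)
  fix G a assume "lf G"
  show "sat G a phi \<longleftrightarrow> rep (map (\<lambda>g. (TX, phi, g)) gl) G a"
    using exh[of G a] by (auto simp: rep_def TX_sat set_gl)
qed

lemma neg_pairs:
  assumes "\<forall>(\<alpha>, \<beta>) \<in> set P. okx d l c \<alpha> \<and> oky d l c \<beta>"
  shows "\<exists>N. (\<forall>(\<alpha>, \<beta>) \<in> set N. okx d l c \<alpha> \<and> oky d l c \<beta>) \<and>
    (\<forall>G a. (\<exists>(\<alpha>, \<beta>) \<in> set N. sat G a \<alpha> \<and> sat G a \<beta>) \<longleftrightarrow> \<not> (\<exists>(\<alpha>, \<beta>) \<in> set P. sat G a \<alpha> \<and> sat G a \<beta>))"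
  using assms
proof (induction P)
  case Nil
  show ?case
    by (rule exI[of _ "[(TX, TY)]"]) (simp add: TX_ok TY_ok TX_sat TY_sat)
next
  case (Cons p P)
  obtain al be where p: "p = (al, be)" by (cases p)
  from Cons obtain N where N1: "\<forall>(\<alpha>, \<beta>) \<in> set N. okx d l c \<alpha> \<and> oky d l c \<beta>"
    and N2: "\<forall>G a. (\<exists>(\<alpha>, \<beta>) \<in> set N. sat G a \<alpha> \<and> sat G a \<beta>) \<longleftrightarrow> \<not> (\<exists>(\<alpha>, \<beta>) \<in> set P. sat G a \<alpha> \<and> sat G a \<beta>)"
    by auto
  have oa: "okx d l c al" and ob: "oky d l c be" using Cons.prems p by auto
  let ?N = "map (\<lambda>(a', b'). (CAnd (CNot al) a', b')) N @ map (\<lambda>(a', b'). (a', CAnd (CNot be) b')) N"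
  show ?case
  proof (intro exI conjI allI)
    show "\<forall>(\<alpha>, \<beta>) \<in> set ?N. okx d l c \<alpha> \<and> oky d l c \<beta>"
    proof (clarify)
      fix a' b' assume "(a', b') \<in> set ?N"
      then obtain a2 b2 where m: "(a2, b2) \<in> set N" and
        "(a' = CAnd (CNot al) a2 \<and> b' = b2) \<or> (a' = a2 \<and> b' = CAnd (CNot be) b2)"
        by auto
      moreover have "okx d l c a2" "oky d l c b2" using N1 m by auto
      ultimately show "okx d l c a' \<and> oky d l c b'"
        using oa ob okx_and okx_not oky_and oky_not by metis
    qed
    fix G a
    show "(\<exists>(\<alpha>, \<beta>) \<in> set ?N. sat G a \<alpha> \<and> sat G a \<beta>) \<longleftrightarrow> \<not> (\<exists>(\<alpha>, \<beta>) \<in> set (p # P). sat G a \<alpha> \<and> sat G a \<beta>)"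
    proof -
      have e: "(\<exists>(\<alpha>, \<beta>) \<in> set ?N. sat G a \<alpha> \<and> sat G a \<beta>) \<longleftrightarrow>
        (\<not> sat G a al \<or> \<not> sat G a be) \<and> (\<exists>(\<alpha>, \<beta>) \<in> set N. sat G a \<alpha> \<and> sat G a \<beta>)"
      proof
        assume "\<exists>(\<alpha>, \<beta>) \<in> set ?N. sat G a \<alpha> \<and> sat G a \<beta>"
        then obtain x y where "(x, y) \<in> set ?N" "sat G a x" "sat G a y" by blast
        then obtain a2 b2 where m: "(a2, b2) \<in> set N" and
          "(x = CAnd (CNot al) a2 \<and> y = b2) \<or> (x = a2 \<and> y = CAnd (CNot be) b2)"
          by auto
        then show "(\<not> sat G a al \<or> \<not> sat G a be) \<and> (\<exists>(\<alpha>, \<beta>) \<in> set N. sat G a \<alpha> \<and> sat G a \<beta>)"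
          using \<open>sat G a x\<close> \<open>sat G a y\<close> by (auto intro!: bexI[of _ "(a2, b2)"])
      next
        assume h: "(\<not> sat G a al \<or> \<not> sat G a be) \<and> (\<exists>(\<alpha>, \<beta>) \<in> set N. sat G a \<alpha> \<and> sat G a \<beta>)"
        then obtain x y where m: "(x, y) \<in> set N" "sat G a x" "sat G a y" by blast
        show "\<exists>(\<alpha>, \<beta>) \<in> set ?N. sat G a \<alpha> \<and> sat G a \<beta>"
        proof (cases "sat G a al")
          case False
          then have "(CAnd (CNot al) x, y) \<in> set ?N" using m by force
          then show ?thesis using False m by (intro bexI[of _ "(CAnd (CNot al) x, y)"]) auto
        next
          case True
          then have "\<not> sat G a be" using h by blast
          have "(x, CAnd (CNot be) y) \<in> set ?N" using m by force
          then show ?thesis using \<open>\<not> sat G a be\<close> m by (intro bexI[of _ "(x, CAnd (CNot be) y)"]) auto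
        qed
      qed
      show ?thesis unfolding e using N2[rule_format, of G a] p by auto
    qed
  qed
qed

lemma main:
  "in_C2 d l c phi \<Longrightarrow> \<exists>L. good d l c L \<and> (\<forall>G a. lf G \<longrightarrow> (sat G a phi \<longleftrightarrow> rep L G a))"
proof (induction phi)
  case (CEq u v)
  show ?case
  proof (cases u; cases v)
    assume "u = X" "v = X" then show ?thesis using CEq by (intro xonly) (simp add: okx_def)
  next
    assume "u = Y" "v = Y" then show ?thesis using CEq by (intro yonly) (simp add: oky_def)
  next
    assume "u = X" "v = Y" then show ?thesis
      by (intro from_gammas[of "[CEq X Y]"]) (auto simp: gammas_def)
  next
    assume "u = Y" "v = X" then show ?thesis
      by (intro from_gammas[of "[CEq X Y]"]) (auto simp: gammas_def)
  qed
next
  case (CEdge u v)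
  show ?case
  proof (cases u; cases v)
    assume "u = X" "v = X" then show ?thesis using CEdge by (intro xonly) (simp add: okx_def)
  next
    assume "u = Y" "v = Y" then show ?thesis using CEdge by (intro yonly) (simp add: oky_def)
  next
    assume "u = X" "v = Y" then show ?thesis
      by (intro from_gammas[of "[CAnd (CEdge X Y) (CEdge Y X), CAnd (CEdge X Y) (CNot (CEdge Y X))]"])
        (auto simp: gammas_def)
  next
    assume "u = Y" "v = X" then show ?thesis
      by (intro from_gammas[of "[CAnd (CEdge X Y) (CEdge Y X), CAnd (CNot (CEdge X Y)) (CEdge Y X)]"])
        (auto simp: gammas_def)
  qed
next
  case (CPred i v)
  show ?case
  proof (cases v)
    case X then show ?thesis using CPred by (intro xonly) (simp add: okx_def)
  next
    case Y then show ?thesis using CPred by (intro yonly) (simp add: oky_def)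
  qed
next
  case (CEx k v f)
  show ?case
  proof (cases v)
    case Y
    have "free_vars (CEx k v f) \<subseteq> {X}"
    proof
      fix w assume "w \<in> free_vars (CEx k v f)" then show "w \<in> {X}" using Y by (cases w) auto
    qed
    then show ?thesis using CEx.prems by (intro xonly) (simp add: okx_def)
  next
    case X
    have "free_vars (CEx k v f) \<subseteq> {Y}"
    proof
      fix w assume "w \<in> free_vars (CEx k v f)" then show "w \<in> {Y}" using X by (cases w) auto
    qed
    then show ?thesis using CEx.prems by (intro yonly) (simp add: oky_def)
  qed
next
  case (COr f g)
  then obtain L1 L2 where L1: "good d l c L1" "\<forall>G a. lf G \<longrightarrow> (sat G a f \<longleftrightarrow> rep L1 G a)"
    and L2: "good d l c L2" "\<forall>G a. lf G \<longrightarrow> (sat G a g \<longleftrightarrow> rep L2 G a)" by auto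
  show ?case
    by (rule exI[of _ "L1 @ L2"]) (use L1 L2 in \<open>auto simp: good_def rep_def\<close>)
next
  case (CAnd f g)
  then obtain L1 L2 where L1: "good d l c L1" "\<forall>G a. lf G \<longrightarrow> (sat G a f \<longleftrightarrow> rep L1 G a)"
    and L2: "good d l c L2" "\<forall>G a. lf G \<longrightarrow> (sat G a g \<longleftrightarrow> rep L2 G a)" by auto
  let ?L = "[(CAnd a1 a2, CAnd b1 b2, g1). (a1, b1, g1) \<leftarrow> L1, (a2, b2, g2) \<leftarrow> L2, g1 = g2]"
  show ?case
  proof (intro exI conjI allI impI)
    show "good d l c ?L" unfolding good_def
    proof (clarify)
      fix a' b' g' assume "(a', b', g') \<in> set ?L"
      then obtain a1 b1 a2 b2 where m: "(a1, b1, g') \<in> set L1" "(a2, b2, g') \<in> set L2"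
        "a' = CAnd a1 a2" "b' = CAnd b1 b2" by auto
      have "okx d l c a1" "oky d l c b1" "g' \<in> gammas" using L1(1) m(1) unfolding good_def by auto
      moreover have "okx d l c a2" "oky d l c b2" using L2(1) m(2) unfolding good_def by auto
      ultimately show "okx d l c a' \<and> oky d l c b' \<and> g' \<in> gammas"
        using m okx_and oky_and by metis
    qed
    fix G a assume lfG: "lf G"
    show "sat G a (CAnd f g) \<longleftrightarrow> rep ?L G a"
    proof
      assume "sat G a (CAnd f g)"
      then obtain a1 b1 g1 a2 b2 g2 where "(a1, b1, g1) \<in> set L1" "sat G a a1" "sat G a b1" "sat G a g1"
        "(a2, b2, g2) \<in> set L2" "sat G a a2" "sat G a b2" "sat G a g2"
        using L1(2) L2(2) lfG by (auto simp: rep_def)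
      moreover have "g1 = g2" using excl[OF lfG, of g1 g2 a] L1(1) L2(1) calculation
        by (fastforce simp: good_def)
      ultimately show "rep ?L G a" by (fastforce simp: rep_def)
    next
      assume "rep ?L G a"
      then show "sat G a (CAnd f g)" using L1(2) L2(2) lfG by (fastforce simp: rep_def)
    qed
  qed
next
  case (CNot f)
  then obtain L where L: "good d l c L" "\<forall>G a. lf G \<longrightarrow> (sat G a f \<longleftrightarrow> rep L G a)" by auto
  define P where "P g = [(a1, b1). (a1, b1, g1) \<leftarrow> L, g1 = g]" for g
  have "\<forall>g. \<exists>N. (\<forall>(\<alpha>, \<beta>) \<in> set N. okx d l c \<alpha> \<and> oky d l c \<beta>) \<and>
    (\<forall>G a. (\<exists>(\<alpha>, \<beta>) \<in> set N. sat G a \<alpha> \<and> sat G a \<beta>) \<longleftrightarrow> \<not> (\<exists>(\<alpha>, \<beta>) \<in> set (P g). sat G a \<alpha> \<and> sat G a \<beta>))"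
  proof
    fix g
    show "\<exists>N. (\<forall>(\<alpha>, \<beta>) \<in> set N. okx d l c \<alpha> \<and> oky d l c \<beta>) \<and>
    (\<forall>G a. (\<exists>(\<alpha>, \<beta>) \<in> set N. sat G a \<alpha> \<and> sat G a \<beta>) \<longleftrightarrow> \<not> (\<exists>(\<alpha>, \<beta>) \<in> set (P g). sat G a \<alpha> \<and> sat G a \<beta>))"
      by (rule neg_pairs) (use L(1) in \<open>fastforce simp: P_def good_def\<close>)
  qed
  then obtain Nf where Nf1: "\<And>g. \<forall>(\<alpha>, \<beta>) \<in> set (Nf g). okx d l c \<alpha> \<and> oky d l c \<beta>"
    and Nf2: "\<And>g G a. (\<exists>(\<alpha>, \<beta>) \<in> set (Nf g). sat G a \<alpha> \<and> sat G a \<beta>) \<longleftrightarrow> \<not> (\<exists>(\<alpha>, \<beta>) \<in> set (P g). sat G a \<alpha> \<and> sat G a \<beta>)"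
    by metis
  let ?L = "concat (map (\<lambda>g. map (\<lambda>(a1, b1). (a1, b1, g)) (Nf g)) gl)"
  show ?case
  proof (intro exI conjI allI impI)
    show "good d l c ?L" using Nf1 by (fastforce simp: good_def set_gl)
    fix G a assume lfG: "lf G"
    obtain g0 where g0: "g0 \<in> gammas" "sat G a g0" using exh by blast
    have "rep L G a \<longleftrightarrow> (\<exists>(\<alpha>, \<beta>) \<in> set (P g0). sat G a \<alpha> \<and> sat G a \<beta>)"
    proof
      assume "rep L G a"
      then obtain a1 b1 g1 where "(a1, b1, g1) \<in> set L" "sat G a a1" "sat G a b1" "sat G a g1"
        by (auto simp: rep_def)
      moreover have "g1 = g0" using excl[OF lfG, of g1 g0 a] L(1) g0 calculation
        by (fastforce simp: good_def)
      ultimately show "\<exists>(\<alpha>, \<beta>) \<in> set (P g0). sat G a \<alpha> \<and> sat G a \<beta>"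
        by (fastforce simp: P_def)
    next
      assume "\<exists>(\<alpha>, \<beta>) \<in> set (P g0). sat G a \<alpha> \<and> sat G a \<beta>"
      then show "rep L G a" using g0 by (fastforce simp: P_def rep_def)
    qed
    moreover have "rep ?L G a \<longleftrightarrow> (\<exists>(\<alpha>, \<beta>) \<in> set (Nf g0). sat G a \<alpha> \<and> sat G a \<beta>)"
    proof
      assume "rep ?L G a"
      then obtain a1 b1 g1 where "g1 \<in> gammas" "(a1, b1) \<in> set (Nf g1)" "sat G a a1" "sat G a b1" "sat G a g1"
        by (auto simp: rep_def set_gl)
      moreover have "g1 = g0" using excl[OF lfG, of g1 g0 a] g0 calculation by blast
      ultimately show "\<exists>(\<alpha>, \<beta>) \<in> set (Nf g0). sat G a \<alpha> \<and> sat G a \<beta>" by blast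
    next
      assume "\<exists>(\<alpha>, \<beta>) \<in> set (Nf g0). sat G a \<alpha> \<and> sat G a \<beta>"
      then obtain x y where m: "(x, y) \<in> set (Nf g0)" "sat G a x" "sat G a y" by blast
      have "(x, y, g0) \<in> set ?L" using m(1) g0(1) by (force simp: set_gl[symmetric])
      then show "rep ?L G a" unfolding rep_def using m g0 by (intro bexI[of _ "(x, y, g0)"]) auto
    qed
    ultimately show "sat G a (CNot f) \<longleftrightarrow> rep ?L G a"
      using Nf2[of g0 G a] L(2) lfG by auto
  qed
qed

theorem lemma1:
  fixes d l c :: nat and phi :: c2
  assumes "in_C2 d l c phi"
  shows "\<exists>L :: (c2 \<times> c2 \<times> c2) list.
     (\<forall>(\<alpha>, \<beta>, \<gamma>) \<in> set L.
        in_C2 d l c \<alpha> \<and> free_vars \<alpha> \<subseteq> {X} \<and>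
        in_C2 d l c \<beta> \<and> free_vars \<beta> \<subseteq> {Y} \<and> \<gamma> \<in> gammas) \<and>
     (\<forall>G a. is_digraph G \<and> a X \<in> nodes G \<and> a Y \<in> nodes G \<longrightarrow>
        (sat G a phi \<longleftrightarrow>
          (\<exists>(\<alpha>, \<beta>, \<gamma>) \<in> set L. sat G a \<alpha> \<and> sat G a \<beta> \<and> sat G a \<gamma>)))"
proof -
  obtain L where L: "good d l c L" "\<forall>G a. lf G \<longrightarrow> (sat G a phi \<longleftrightarrow> rep L G a)"
    using main[OF assms] by blast
  show ?thesis
  proof (intro exI conjI allI impI)
    show "\<forall>(\<alpha>, \<beta>, \<gamma>) \<in> set L.
        in_C2 d l c \<alpha> \<and> free_vars \<alpha> \<subseteq> {X} \<and>
        in_C2 d l c \<beta> \<and> free_vars \<beta> \<subseteq> {Y} \<and> \<gamma> \<in> gammas"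
      using L(1) by (auto simp: good_def okx_def oky_def)
    fix G a assume "is_digraph G \<and> a X \<in> nodes G \<and> a Y \<in> nodes G"
    then have "lf G" by (simp add: is_digraph_def lf_def)
    then show "sat G a phi \<longleftrightarrow> (\<exists>(\<alpha>, \<beta>, \<gamma>) \<in> set L. sat G a \<alpha> \<and> sat G a \<beta> \<and> sat G a \<gamma>)"
      using L(2) by (simp add: rep_def)
  qed
qed

end
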